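(* Let $\gamma\in[0,1)$ and $\Omega_{\gamma}=\{z\in\mathbb{C}:|z+\frac{\gamma}{1-\gamma}|<\frac{1}{1-\gamma}\}$. Let $f=h+\overline{g}$ be a harmonic mapping in $\Omega_\gamma$ with $h,g$ analytic in $\Omega_\gamma$, $|h(z)|\le 1$ on $\Omega_\gamma$, $h(z)=\sum_{n=0}^\infty a_n\left(z+\frac{\gamma}{1-\gamma}\right)^n$ and $g(z)=\sum_{n=1}^\infty b_n\left(z+\frac{\gamma}{1-\gamma}\right)^n$ in $\Omega_\gamma$, and $f$ sense-preserving in $\Omega_\gamma$. Then $$\sum_{n=0}^\infty \frac{|a_n|}{(1-\gamma)^n}\rho^n+\sum_{n=1}^\infty\frac{|b_n|}{(1-\gamma)^n}\rho^n\le 1$$ for $|(1-\gamma)z+\gamma|=\rho\le\rho_0=1/5$. The number $\rho_0$ is best possible.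
   Context: $\Omega_\gamma$ is the open disk centered at $-\gamma/(1-\gamma)$ of radius $1/(1-\gamma)$. A harmonic mapping $f=h+\overline g$ is sense-preserving in $\Omega_\gamma$ if its Jacobian $J_f=|h'|^2-|g'|^2$ is positive in $\Omega_\gamma$ (equivalently $h'\neq0$ and the dilatation $g'/h'$ has modulus less than $1$). *)

theory Defs
  imports "HOL-Analysis.Analysis"
begin

definition Omega :: "real \<Rightarrow> complex set" where
  "Omega \<gamma> = ball (- complex_of_real (\<gamma> / (1 - \<gamma>))) (1 / (1 - \<gamma>))"

text \<open>f = h + conj g is sense-preserving on S: Jacobian |h'|^2 - |g'|^2 positive on S.\<close>
definition sense_preserving_on :: "(complex \<Rightarrow> complex) \<Rightarrow> (complex \<Rightarrow> complex) \<Rightarrow> complex set \<Rightarrow> bool" where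
  "sense_preserving_on h g S \<longleftrightarrow> (\<forall>z\<in>S. (cmod (deriv h z))^2 - (cmod (deriv g z))^2 > 0)"

definition bohr_hyps :: "real \<Rightarrow> (complex \<Rightarrow> complex) \<Rightarrow> (complex \<Rightarrow> complex) \<Rightarrow> (nat \<Rightarrow> complex) \<Rightarrow> (nat \<Rightarrow> complex) \<Rightarrow> bool" where
  "bohr_hyps \<gamma> h g a b \<longleftrightarrow>
     h holomorphic_on Omega \<gamma> \<and> g holomorphic_on Omega \<gamma> \<and>
     (\<forall>z\<in>Omega \<gamma>. cmod (h z) \<le> 1) \<and>
     (\<forall>z\<in>Omega \<gamma>. (\<lambda>n. a n * (z + complex_of_real (\<gamma> / (1 - \<gamma>))) ^ n) sums h z) \<and>
     (\<forall>z\<in>Omega \<gamma>. (\<lambda>n. b (Suc n) * (z + complex_of_real (\<gamma> / (1 - \<gamma>))) ^ Suc n) sums g z) \<and>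
     sense_preserving_on h g (Omega \<gamma>)"

definition bohr_sum :: "real \<Rightarrow> (nat \<Rightarrow> complex) \<Rightarrow> (nat \<Rightarrow> complex) \<Rightarrow> real \<Rightarrow> real" where
  "bohr_sum \<gamma> a b \<rho> =
     (\<Sum>n. cmod (a n) / (1 - \<gamma>) ^ n * \<rho> ^ n) +
     (\<Sum>n. cmod (b (Suc n)) / (1 - \<gamma>) ^ Suc n * \<rho> ^ Suc n)"

end

theory Submission
  imports Defs "HOL-Complex_Analysis.Complex_Analysis"
begin

lemma rou_sum:
  assumes "n > 0"
  shows "(\<Sum>k<n. exp(2 * of_real pi * \<i> * of_nat k / of_nat n) ^ m) = (if n dvd m then of_nat n else (0::complex))"
proof -
  define x where "x = exp(2 * of_real pi * \<i> * of_nat m / of_nat n)"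
  have eq: "exp(2 * of_real pi * \<i> * of_nat k / of_nat n) ^ m = x ^ k" for k
  proof -
    have "exp(2 * of_real pi * \<i> * of_nat k / of_nat n) ^ m = exp(of_nat m * (2 * of_real pi * \<i> * of_nat k / of_nat n))"
      by (rule exp_of_nat_mult[symmetric])
    also have "\<dots> = exp(of_nat k * (2 * of_real pi * \<i> * of_nat m / of_nat n))"
      by (simp add: algebra_simps)
    also have "\<dots> = x ^ k" unfolding x_def by (rule exp_of_nat_mult)
    finally show ?thesis .
  qed
  have x1: "x = 1 \<longleftrightarrow> n dvd m" unfolding x_def using complex_root_unity_eq_1[of n m] assms by simp
  have xn: "x ^ n = 1" unfolding x_def using complex_root_unity[of n m] assms by simp
  show ?thesis
  proof (cases "n dvd m")
    case True
    then show ?thesis using x1 eq by simp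
  next
    case False
    then have "x \<noteq> 1" using x1 by simp
    then have "(\<Sum>k<n. x ^ k) = (1 - x^n) / (1 - x)" by (simp add: sum_gp_strict)
    then show ?thesis using False eq xn by simp
  qed
qed

lemma le1_of_lt1:
  fixes x :: real
  assumes "\<And>r. 0 < r \<Longrightarrow> r < 1 \<Longrightarrow> x * r ^ n \<le> 1"
  shows "x \<le> 1"
proof -
  have "((\<lambda>r. x * r ^ n) \<longlongrightarrow> x * 1 ^ n) (at_left (1::real))"
    by (intro tendsto_intros)
  moreover have "eventually (\<lambda>r. x * r ^ n \<le> 1) (at_left (1::real))"
    using eventually_at_left_real[of 0 1] by (auto elim!: eventually_mono intro: assms)
  ultimately have "x * 1 ^ n \<le> 1"
    by (intro tendsto_le[OF trivial_limit_at_left_real tendsto_const]) auto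
  then show ?thesis by simp
qed

lemma moebius_le:
  fixes a w :: complex
  assumes "norm w \<le> 1" "norm a < 1"
  shows "norm (w - a) \<le> norm (1 - cnj a * w)"
proof -
  have id: "(cmod (1 - cnj a * w))^2 - (cmod (w - a))^2 = (1 - (cmod a)^2) * (1 - (cmod w)^2)"
    unfolding cmod_power2 by (simp add: power2_eq_square algebra_simps)
  have "0 \<le> (1 - (cmod a)^2) * (1 - (cmod w)^2)"
    using assms by (intro mult_nonneg_nonneg) (auto simp: power_le_one abs_square_le_1)
  then have "(cmod (w - a))^2 \<le> (cmod (1 - cnj a * w))^2" using id by linarith
  then show ?thesis by (simp add: power2_le_iff_abs_le)
qed

lemma wiener_strict:
  fixes F :: "complex \<Rightarrow> complex" and c :: "nat \<Rightarrow> complex"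
  assumes holF: "F holomorphic_on ball 0 1"
    and bnd: "\<And>u. u \<in> ball 0 1 \<Longrightarrow> norm (F u) \<le> 1"
    and ser: "\<And>u. u \<in> ball 0 1 \<Longrightarrow> (\<lambda>m. c m * u^m) sums F u"
    and c0: "norm (c 0) < 1" and n: "n > 0"
  shows "norm (c n) \<le> 1 - norm (c 0)^2"
proof -
  define e where "e k = exp(2 * of_real pi * \<i> * of_nat k / of_nat n)" for k
  have ne: "norm (e k) = 1" for k
    by (simp add: e_def norm_exp_eq_Re)
  have eu: "e k * u \<in> ball 0 1" if "u \<in> ball 0 1" for k u
    using that by (simp add: norm_mult ne)
  define S where "S u = (1 / of_nat n) * (\<Sum>k<n. F (e k * u))" for u
  define d where "d m = (if n dvd m then c m else 0)" for m
  have Ssum: "(\<lambda>m. d m * u^m) sums S u" if "u \<in> ball 0 1" for u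
  proof -
    have "(\<lambda>m. \<Sum>k<n. c m * (e k * u)^m) sums (\<Sum>k<n. F (e k * u))"
      by (intro sums_sum ser eu that)
    then have "(\<lambda>m. (1/of_nat n) * (\<Sum>k<n. c m * (e k * u)^m)) sums S u"
      unfolding S_def by (rule sums_mult)
    moreover have "(1/of_nat n) * (\<Sum>k<n. c m * (e k * u)^m) = d m * u^m" for m
    proof -
      have "(\<Sum>k<n. c m * (e k * u)^m) = c m * u^m * (\<Sum>k<n. e k ^ m)"
        by (simp add: power_mult_distrib sum_distrib_left algebra_simps)
      also have "\<dots> = c m * u^m * (if n dvd m then of_nat n else 0)"
        using rou_sum[OF n, of m] by (simp add: e_def)
      finally show ?thesis using n by (simp add: d_def)
    qed
    ultimately show ?thesis by simp
  qed
  have Sbnd: "norm (S u) \<le> 1" if "u \<in> ball 0 1" for u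
  proof -
    have "norm (\<Sum>k<n. F (e k * u)) \<le> (\<Sum>k<n. norm (F (e k * u)))" by (rule norm_sum)
    also have "\<dots> \<le> (\<Sum>k<n. 1)" by (intro sum_mono bnd eu that)
    finally have "norm (\<Sum>k<n. F (e k * u)) \<le> real n" by simp
    then show ?thesis using n by (simp add: S_def norm_mult norm_divide divide_le_eq)
  qed
  have holk: "(\<lambda>u. F (e k * u)) holomorphic_on ball 0 1" for k
  proof -
    have "(\<lambda>u. e k * u) ` ball 0 1 \<subseteq> ball 0 1" using eu by auto
    then show ?thesis
      using holomorphic_on_compose_gen[of "\<lambda>u. e k * u" "ball 0 1" F "ball 0 1"] holF
      by (auto simp: o_def intro: holomorphic_intros)
  qed
  have holS: "S holomorphic_on ball 0 1"
    unfolding S_def by (intro holomorphic_intros holk)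
  define SF where "SF = Abs_fps d"
  have Sexp: "S has_fps_expansion SF"
  proof (rule has_fps_expansionI)
    have "eventually (\<lambda>u. u \<in> ball 0 1) (nhds (0::complex))"
      by (intro eventually_nhds_in_open) auto
    then show "eventually (\<lambda>u. (\<lambda>n. SF $ n * u ^ n) sums S u) (nhds 0)"
      by eventually_elim (simp add: SF_def Ssum)
  qed
  define \<Phi> where "\<Phi> u = (S u - c 0) * inverse (1 - cnj (c 0) * S u)" for u
  have den: "1 - cnj (c 0) * S u \<noteq> 0" if "u \<in> ball 0 1" for u
  proof -
    have "norm (cnj (c 0) * S u) \<le> norm (c 0) * 1"
      unfolding norm_mult complex_mod_cnj by (intro mult_left_mono Sbnd that) auto
    then have "norm (cnj (c 0) * S u) < 1" using c0 by simp
    then show ?thesis by auto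
  qed
  have \<Phi>bnd: "norm (\<Phi> u) \<le> 1" if "u \<in> ball 0 1" for u
  proof -
    have "norm (S u - c 0) \<le> norm (1 - cnj (c 0) * S u)"
      by (rule moebius_le[OF Sbnd[OF that] c0])
    moreover have "norm (1 - cnj (c 0) * S u) > 0" using den[OF that] by simp
    moreover have "norm (\<Phi> u) = norm (S u - c 0) / norm (1 - cnj (c 0) * S u)"
      by (simp add: \<Phi>_def norm_mult norm_inverse divide_inverse)
    ultimately show ?thesis by (simp add: divide_le_eq_1)
  qed
  have hol\<Phi>: "\<Phi> holomorphic_on ball 0 1"
    unfolding \<Phi>_def by (intro holomorphic_intros holS) (use den in auto)
  define \<Phi>F where "\<Phi>F = (SF - fps_const (c 0)) * inverse (1 - fps_const (cnj (c 0)) * SF)"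
  have nz: "1 - cnj (c 0) * c 0 \<noteq> 0"
  proof -
    have "norm (cnj (c 0) * c 0) < 1" using c0
      by (simp add: norm_mult) (metis abs_norm_cancel abs_square_less_1 power2_eq_square)
    then show ?thesis by auto
  qed
  have \<Phi>exp: "\<Phi> has_fps_expansion \<Phi>F"
    unfolding \<Phi>_def[abs_def] \<Phi>F_def
    using nz by (intro has_fps_expansion_mult has_fps_expansion_inverse has_fps_expansion_diff Sexp
      has_fps_expansion_const has_fps_expansion_cmult_left has_fps_expansion_1) (auto simp: SF_def d_def)
  have Xn: "(SF - fps_const (c 0)) $ i = (if i = n then c n else 0)" if "i \<le> n" for i
    using that n by (auto simp: SF_def d_def dest: dvd_imp_le)
  have coef: "\<Phi>F $ n = c n * inverse (1 - cnj (c 0) * c 0)"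
  proof -
    have "\<Phi>F $ n = (\<Sum>i=0..n. (SF - fps_const (c 0)) $ i * (inverse (1 - fps_const (cnj (c 0)) * SF)) $ (n - i))"
      unfolding \<Phi>F_def by (rule fps_mult_nth)
    also have "\<dots> = (\<Sum>i\<in>{n}. (SF - fps_const (c 0)) $ i * (inverse (1 - fps_const (cnj (c 0)) * SF)) $ (n - i))"
      by (rule sum.mono_neutral_right) (auto simp: SF_def d_def dest: dvd_imp_le)
    also have "\<dots> = c n * inverse (1 - cnj (c 0) * c 0)"
      using n by (simp add: SF_def d_def)
    finally show ?thesis .
  qed
  have "norm (\<Phi>F $ n) * r ^ n \<le> 1" if r: "0 < r" "r < 1" for r
  proof -
    have "norm ((deriv ^^ n) \<Phi> 0) \<le> fact n * 1 / r ^ n"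
    proof (rule Cauchy_inequality)
      show "\<Phi> holomorphic_on ball 0 r" using r by (intro holomorphic_on_subset[OF hol\<Phi>]) auto
      show "continuous_on (cball 0 r) \<Phi>"
        using r by (intro continuous_on_subset[OF holomorphic_on_imp_continuous_on[OF hol\<Phi>]]) auto
      show "norm (\<Phi> x) \<le> 1" if "norm (0 - x) = r" for x
        using that r by (intro \<Phi>bnd) auto
    qed (use r in auto)
    moreover have "\<Phi>F $ n = (deriv ^^ n) \<Phi> 0 / fact n"
      by (rule fps_nth_fps_expansion[OF \<Phi>exp])
    then have "norm ((deriv ^^ n) \<Phi> 0) = fact n * norm (\<Phi>F $ n)"
      by (simp add: norm_divide norm_fact)
    ultimately have "fact n * (norm (\<Phi>F $ n) * r ^ n) \<le> fact n * 1" using r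
      by (simp add: field_simps)
    then show ?thesis by (subst (asm) mult_le_cancel_left_pos) auto
  qed
  then have "norm (\<Phi>F $ n) \<le> 1" by (rule le1_of_lt1)
  moreover have "cnj (c 0) * c 0 = of_real ((norm (c 0))^2)"
    by (simp add: complex_norm_square[symmetric] mult.commute)
  moreover have "(norm (c 0))^2 < 1" using c0
    by (metis abs_norm_cancel abs_square_less_1)
  ultimately have "\<Phi>F $ n = c n * of_real (1 / (1 - (norm (c 0))^2))" and q: "(norm (c 0))^2 < 1"
    and le: "norm (\<Phi>F $ n) \<le> 1"
    unfolding coef by (auto simp: of_real_diff inverse_eq_divide)
  then have "norm (\<Phi>F $ n) = norm (c n) * abs (1 / (1 - (norm (c 0))^2))"
    by (simp only: norm_mult norm_of_real)
  then have "norm (\<Phi>F $ n) = norm (c n) / (1 - (norm (c 0))^2)"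
    using q by simp
  with le q show ?thesis by (simp add: divide_le_eq)
qed

lemma le_at_left1:
  fixes f g :: "real \<Rightarrow> real"
  assumes "\<And>t. 0 < t \<Longrightarrow> t < 1 \<Longrightarrow> f t \<le> g t"
    and "(f \<longlongrightarrow> A) (at_left 1)" and "(g \<longlongrightarrow> B) (at_left 1)"
  shows "A \<le> B"
proof -
  have "eventually (\<lambda>t. f t \<le> g t) (at_left (1::real))"
    using eventually_at_left_real[of 0 1] by (auto elim!: eventually_mono intro: assms)
  then show ?thesis
    using tendsto_le[OF trivial_limit_at_left_real assms(3) assms(2)] by auto
qed

lemma wiener:
  fixes F :: "complex \<Rightarrow> complex" and c :: "nat \<Rightarrow> complex"
  assumes holF: "F holomorphic_on ball 0 1"
    and bnd: "\<And>u. u \<in> ball 0 1 \<Longrightarrow> norm (F u) \<le> 1"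
    and ser: "\<And>u. u \<in> ball 0 1 \<Longrightarrow> (\<lambda>m. c m * u^m) sums F u"
    and n: "n > 0"
  shows "norm (c n) \<le> 1 - norm (c 0)^2"
proof -
  have c0: "norm (c 0) \<le> 1"
  proof -
    have "(\<lambda>m. c m * 0^m) sums F 0" using ser[of 0] by simp
    then have "F 0 = c 0" using sums_unique2[OF _ powser_sums_zero] by auto
    then show ?thesis using bnd[of 0] by simp
  qed
  have key: "t * norm (c n) \<le> 1 - t^2 * norm (c 0)^2" if t: "0 < t" "t < 1" for t
  proof -
    have "norm (of_real t * c n) \<le> 1 - norm (of_real t * c 0)^2"
    proof (rule wiener_strict[where F="\<lambda>u. of_real t * F u"])
      show "(\<lambda>u. of_real t * F u) holomorphic_on ball 0 1" by (intro holomorphic_intros holF)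
      show "norm (of_real t * F u) \<le> 1" if "u \<in> ball 0 1" for u
      proof -
        have "norm (of_real t * F u) = t * norm (F u)" using t by (simp add: norm_mult)
        also have "\<dots> \<le> 1 * 1" using t bnd[OF that] by (intro mult_mono) auto
        finally show ?thesis by simp
      qed
      show "(\<lambda>m. of_real t * c m * u ^ m) sums (of_real t * F u)" if "u \<in> ball 0 1" for u
        using sums_mult[OF ser[OF that], of "of_real t"] by (simp add: mult.assoc)
      show "norm (of_real t * c 0) < 1"
      proof -
        have "norm (of_real t * c 0) = t * norm (c 0)" using t by (simp add: norm_mult)
        also have "\<dots> \<le> t * 1" using t c0 by (intro mult_left_mono) auto
        finally show ?thesis using t by simp
      qed
    qed (use n in auto)
    then show ?thesis using t by (simp add: norm_mult power_mult_distrib)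
  qed
  have "1 * norm (c n) \<le> 1 - 1^2 * norm (c 0)^2"
    by (rule le_at_left1[OF key]) (auto intro!: tendsto_eq_intros)
  then show ?thesis by simp
qed


lemma final_ineq:
  fixes \<alpha> w t :: real
  assumes "0 \<le> \<alpha>" "\<alpha> \<le> 1" "0 \<le> w" "w \<le> 1" "0 \<le> t" "t \<le> 1/4"
  shows "\<alpha> + (1 - \<alpha>^2) * t + (1 - \<alpha>^2) * w * t + (1 - \<alpha>^2) * (1 - w^2) * t^2 \<le> 1"
proof -
  have c: "0 \<le> 1 - \<alpha>^2" using assms by (simp add: power_le_one)
  have "(1 - w^2) * t \<le> (1 - w^2) * (1/4)" using assms by (intro mult_left_mono) (auto simp: power_le_one)
  also have "\<dots> \<le> 1 - w"
  proof -
    have "0 \<le> (1 - w) * (3 - w)" using assms by (intro mult_nonneg_nonneg) auto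
    then show ?thesis by (simp add: power2_eq_square field_simps)
  qed
  finally have d: "(1 - w^2) * t \<le> 1 - w" .
  have "1 + w + (1 - w^2) * t \<le> 2" using d by linarith
  then have "t * (1 + w + (1 - w^2) * t) \<le> t * 2" using assms by (intro mult_left_mono) auto
  also have "\<dots> \<le> 1/2" using assms by simp
  finally have e: "t * (1 + w + (1 - w^2) * t) \<le> 1/2" .
  have "(1 - \<alpha>^2) * (t * (1 + w + (1 - w^2) * t)) \<le> (1 - \<alpha>^2) * (1/2)"
    using c e by (intro mult_left_mono) auto
  moreover have "\<alpha> + (1 - \<alpha>^2) * (1/2) \<le> 1"
  proof -
    have "0 \<le> (1 - \<alpha>)^2" by simp
    then show ?thesis by (simp add: power2_eq_square field_simps)
  qed
  moreover have "\<alpha> + (1 - \<alpha>^2) * t + (1 - \<alpha>^2) * w * t + (1 - \<alpha>^2) * (1 - w^2) * t^2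
      = \<alpha> + (1 - \<alpha>^2) * (t * (1 + w + (1 - w^2) * t))"
    by (simp add: algebra_simps power2_eq_square)
  ultimately show ?thesis by linarith
qed

lemma bohr_unit:
  fixes H G :: "complex \<Rightarrow> complex" and A B :: "nat \<Rightarrow> complex" and \<rho> :: real
  assumes holH: "H holomorphic_on ball 0 1" and holG: "G holomorphic_on ball 0 1"
    and bndH: "\<And>u. u \<in> ball 0 1 \<Longrightarrow> norm (H u) \<le> 1"
    and serH: "\<And>u. u \<in> ball 0 1 \<Longrightarrow> (\<lambda>n. A n * u^n) sums H u"
    and serG: "\<And>u. u \<in> ball 0 1 \<Longrightarrow> (\<lambda>n. B (Suc n) * u^(Suc n)) sums G u"
    and sp: "\<And>u. u \<in> ball 0 1 \<Longrightarrow> norm (deriv G u)^2 < norm (deriv H u)^2"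
    and \<rho>: "0 \<le> \<rho>" "\<rho> \<le> 1/5"
  shows "(\<Sum>n. norm (A n) * \<rho>^n) + (\<Sum>n. norm (B (Suc n)) * \<rho>^(Suc n)) \<le> 1"
proof -
  have ev: "eventually (\<lambda>u. u \<in> ball 0 1) (nhds (0::complex))"
    by (intro eventually_nhds_in_open) auto
  define B' where "B' n = (if n = 0 then 0 else B n)" for n
  have serG': "(\<lambda>n. B' n * u^n) sums G u" if "u \<in> ball 0 1" for u
  proof -
    have "(\<lambda>n. B' (Suc n) * u^(Suc n)) sums G u" using serG[OF that] by (simp add: B'_def)
    then show ?thesis by (subst (asm) sums_Suc_iff) (simp add: B'_def)
  qed
  define AF where "AF = Abs_fps A"
  define BF where "BF = Abs_fps B'"
  have Hexp: "H has_fps_expansion AF"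
    by (rule has_fps_expansionI) (use ev in \<open>eventually_elim, simp add: AF_def serH\<close>)
  have Gexp: "G has_fps_expansion BF"
    by (rule has_fps_expansionI) (use ev in \<open>eventually_elim, simp add: BF_def serG'\<close>)
  have lt: "norm (deriv G u) < norm (deriv H u)" if "u \<in> ball 0 1" for u
    using sp[OF that] by (simp add: power_less_imp_less_base)
  have Hnz: "deriv H u \<noteq> 0" if "u \<in> ball 0 1" for u
    using lt[OF that] by auto
  define \<omega> where "\<omega> u = deriv G u / deriv H u" for u
  have hol\<omega>: "\<omega> holomorphic_on ball 0 1"
    unfolding \<omega>_def[abs_def] using Hnz
    by (intro holomorphic_intros holomorphic_deriv holG holH) auto
  have bnd\<omega>: "norm (\<omega> u) \<le> 1" if "u \<in> ball 0 1" for u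
    using lt[OF that] Hnz[OF that] by (simp add: \<omega>_def norm_divide divide_le_eq_1)
  define WF where "WF = fps_expansion \<omega> 0"
  have Wexp: "\<omega> has_fps_expansion WF"
    unfolding WF_def by (rule has_fps_expansion_fps_expansion[OF _ _ hol\<omega>]) auto
  have serW: "(\<lambda>n. WF $ n * u^n) sums \<omega> u" if "u \<in> ball 0 1" for u
    by (rule has_fps_expansion_imp_sums_complex[OF Wexp, of 1]) (use hol\<omega> that in auto)
  define \<alpha> where "\<alpha> = norm (A 0)"
  define w where "w = norm (WF $ 0)"
  have wA: "norm (A n) \<le> 1 - \<alpha>^2" if "n > 0" for n
    unfolding \<alpha>_def by (rule wiener[OF holH bndH serH that])
  have wW: "norm (WF $ n) \<le> 1 - w^2" if "n > 0" for n
    unfolding w_def by (rule wiener[OF hol\<omega> bnd\<omega> serW that])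
  have \<alpha>1: "\<alpha> \<le> 1" and \<alpha>0: "0 \<le> \<alpha>"
  proof -
    have "0 \<le> 1 - \<alpha>^2" using wA[of 1] norm_ge_zero[of "A 1"] by linarith
    then show "\<alpha> \<le> 1" using \<alpha>_def by (simp add: abs_square_le_1)
  qed (simp add: \<alpha>_def)
  have w1: "w \<le> 1" and w0: "0 \<le> w"
  proof -
    have "0 \<le> 1 - w^2" using wW[of 1] norm_ge_zero[of "WF $ 1"] by linarith
    then show "w \<le> 1" using w_def by (simp add: abs_square_le_1)
  qed (simp add: w_def)
  define cc where "cc = 1 - \<alpha>^2"
  define d where "d = 1 - w^2"
  have cc0: "0 \<le> cc" "cc \<le> 1" using \<alpha>0 \<alpha>1 by (auto simp: cc_def power_le_one)
  have d0: "0 \<le> d" "d \<le> 1" using w0 w1 by (auto simp: d_def power_le_one)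
  have dG: "deriv G has_fps_expansion fps_deriv BF" by (rule has_fps_expansion_deriv[OF Gexp])
  have dH: "deriv H has_fps_expansion fps_deriv AF" by (rule has_fps_expansion_deriv[OF Hexp])
  have prod: "(\<lambda>u. \<omega> u * deriv H u) has_fps_expansion WF * fps_deriv AF"
    by (rule has_fps_expansion_mult[OF Wexp dH])
  have "eventually (\<lambda>u. \<omega> u * deriv H u = deriv G u) (nhds 0)"
    using ev by eventually_elim (use Hnz in \<open>simp add: \<omega>_def\<close>)
  note cong = has_fps_expansion_cong[OF this refl]
  have "deriv G has_fps_expansion WF * fps_deriv AF"
    using cong prod by simp
  then have eqF: "fps_deriv BF = WF * fps_deriv AF"
    using fps_expansion_unique_complex[OF dG] by blast
  have coefB: "norm (B (Suc k)) \<le> cc * (w + d * k)" for k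
  proof -
    have "(fps_deriv BF) $ k = (WF * fps_deriv AF) $ k" using eqF by simp
    then have eq: "of_nat (Suc k) * B (Suc k) = (\<Sum>i=0..k. WF $ i * (of_nat (k - i + 1) * A (k - i + 1)))"
      by (simp add: fps_mult_nth BF_def AF_def B'_def)
    have "real (Suc k) * norm (B (Suc k)) = norm (of_nat (Suc k) * B (Suc k))"
      by (simp only: norm_mult norm_of_nat)
    also have "\<dots> = norm (\<Sum>i=0..k. WF $ i * (of_nat (k - i + 1) * A (k - i + 1)))"
      by (simp only: eq)
    also have "\<dots> \<le> (\<Sum>i=0..k. norm (WF $ i) * (real (k - i + 1) * norm (A (k - i + 1))))"
      by (rule order.trans[OF norm_sum], rule sum_mono, simp only: norm_mult norm_of_nat order_refl)
    also have "\<dots> \<le> (\<Sum>i=0..k. (if i = 0 then w * (real k + 1) * cc else d * real k * cc))"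
    proof (rule sum_mono)
      fix i assume i: "i \<in> {0..k}"
      have a: "norm (A (k - i + 1)) \<le> cc" using wA[of "k - i + 1"] by (simp add: cc_def)
      show "norm (WF $ i) * (real (k - i + 1) * norm (A (k - i + 1)))
              \<le> (if i = 0 then w * (real k + 1) * cc else d * real k * cc)"
      proof (cases "i = 0")
        case True
        have "norm (WF $ 0) * ((1 + real k) * norm (A (Suc k))) \<le> norm (WF $ 0) * ((1 + real k) * cc)"
          using a True by (intro mult_left_mono) auto
        then show ?thesis using True by (simp add: w_def algebra_simps)
      next
        case False
        then have "norm (WF $ i) \<le> d" using wW[of i] by (simp add: d_def)
        moreover have "real (k - i + 1) \<le> real k" using False i by auto
        ultimately have "norm (WF $ i) * (real (k - i + 1) * norm (A (k - i + 1))) \<le> d * (real k * cc)"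
          using a d0 by (intro mult_mono) auto
        then show ?thesis using False by (simp add: mult.assoc)
      qed
    qed
    also have "\<dots> = w * (real k + 1) * cc + (\<Sum>i=Suc 0..k. d * real k * cc)"
      by (subst sum.atLeast_Suc_atMost) auto
    also have "\<dots> = w * (real k + 1) * cc + d * real k * real k * cc"
      by simp
    also have "\<dots> \<le> real (Suc k) * (cc * (w + d * k))"
      using cc0 d0 by (simp add: algebra_simps mult_nonneg_nonneg)
    finally show ?thesis by (simp only: mult_le_cancel_left_pos)
  qed
  have \<rho>1: "\<rho> < 1" using \<rho> by simp
  have Ale: "norm (A n) \<le> 1" for n
  proof (cases "n = 0")
    case False
    then have "norm (A n) \<le> cc" using wA[of n] by (simp add: cc_def)
    then show ?thesis using cc0 by linarith
  qed (use \<alpha>1 in \<open>simp add: \<alpha>_def\<close>)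
  have sumA: "summable (\<lambda>n. norm (A n) * \<rho>^n)"
    by (rule summable_comparison_test'[OF summable_geometric[of \<rho>], of 0])
       (use \<rho> Ale in \<open>auto intro!: mult_left_le_one_le\<close>)
  have geo: "(\<lambda>n. cc * \<rho>^(Suc n)) sums (cc * \<rho> / (1 - \<rho>))"
    using sums_mult[OF geometric_sums[of \<rho>], of "cc * \<rho>"] \<rho> \<rho>1
    by (simp add: mult.assoc)
  have S1: "(\<Sum>n. norm (A n) * \<rho>^n) = \<alpha> + (\<Sum>n. norm (A (Suc n)) * \<rho>^(Suc n))"
    using suminf_split_head[OF sumA] by (simp add: \<alpha>_def)
  have S1b: "(\<Sum>n. norm (A (Suc n)) * \<rho>^(Suc n)) \<le> cc * \<rho> / (1 - \<rho>)"
  proof -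
    have "(\<Sum>n. norm (A (Suc n)) * \<rho>^(Suc n)) \<le> (\<Sum>n. cc * \<rho>^(Suc n))"
    proof (rule suminf_le)
      show "norm (A (Suc n)) * \<rho>^(Suc n) \<le> cc * \<rho>^(Suc n)" for n
        using wA[of "Suc n"] \<rho> by (intro mult_right_mono) (auto simp: cc_def)
      show "summable (\<lambda>n. norm (A (Suc n)) * \<rho>^(Suc n))"
        using sumA by (subst summable_Suc_iff)
      show "summable (\<lambda>n. cc * \<rho>^(Suc n))" using geo by (rule sums_summable)
    qed
    then show ?thesis using sums_unique[OF geo] by simp
  qed
  have nsum: "(\<lambda>n. of_nat n * \<rho>^n) sums (\<rho> / (1 - \<rho>)^2)"
  proof -
    have "(\<lambda>n. \<rho> * (of_nat (Suc n) * \<rho>^n)) sums (\<rho> * (1 / (1 - \<rho>)^2))"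
      using geometric_deriv_sums[of \<rho>] \<rho> \<rho>1 by (intro sums_mult) auto
    then have "(\<lambda>n. of_nat (Suc n) * \<rho>^(Suc n)) sums (\<rho> / (1 - \<rho>)^2)"
      by (simp add: algebra_simps)
    then show ?thesis by (subst (asm) sums_Suc_iff) simp
  qed
  define g2 where "g2 n = cc * w * \<rho>^(Suc n) + cc * d * \<rho> * (of_nat n * \<rho>^n)" for n
  have g2s: "g2 sums (cc * w * \<rho> / (1 - \<rho>) + cc * d * \<rho> * (\<rho> / (1 - \<rho>)^2))"
  proof -
    have "(\<lambda>n. w * (cc * \<rho>^(Suc n))) sums (w * (cc * \<rho> / (1 - \<rho>)))"
      by (rule sums_mult[OF geo])
    moreover have "(\<lambda>n. cc * d * \<rho> * (of_nat n * \<rho>^n)) sums (cc * d * \<rho> * (\<rho> / (1 - \<rho>)^2))"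
      by (rule sums_mult[OF nsum])
    ultimately show ?thesis unfolding g2_def[abs_def]
      using sums_add by (fastforce simp: algebra_simps)
  qed
  have Ble: "norm (B (Suc n)) * \<rho>^(Suc n) \<le> g2 n" for n
  proof -
    have "norm (B (Suc n)) * \<rho>^(Suc n) \<le> cc * (w + d * n) * \<rho>^(Suc n)"
      using coefB[of n] \<rho> by (intro mult_right_mono) auto
    then show ?thesis by (simp add: g2_def algebra_simps)
  qed
  have sumB: "summable (\<lambda>n. norm (B (Suc n)) * \<rho>^(Suc n))"
    by (rule summable_comparison_test'[OF sums_summable[OF g2s], of 0]) (use Ble \<rho> in auto)
  have S2: "(\<Sum>n. norm (B (Suc n)) * \<rho>^(Suc n)) \<le> cc * w * \<rho> / (1 - \<rho>) + cc * d * \<rho> * (\<rho> / (1 - \<rho>)^2)"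
    using suminf_le[OF Ble sumB sums_summable[OF g2s]] sums_unique[OF g2s] by simp
  define t where "t = \<rho> / (1 - \<rho>)"
  have t0: "0 \<le> t" "t \<le> 1/4" using \<rho> \<rho>1 by (auto simp: t_def field_simps)
  have "\<alpha> + (1 - \<alpha>^2) * t + (1 - \<alpha>^2) * w * t + (1 - \<alpha>^2) * (1 - w^2) * t^2 \<le> 1"
    by (rule final_ineq[OF \<alpha>0 \<alpha>1 w0 w1 t0])
  moreover have "cc * \<rho> / (1 - \<rho>) = (1 - \<alpha>^2) * t" "cc * w * \<rho> / (1 - \<rho>) = (1 - \<alpha>^2) * w * t"
    "cc * d * \<rho> * (\<rho> / (1 - \<rho>)^2) = (1 - \<alpha>^2) * (1 - w^2) * t^2"
    by (simp_all add: cc_def d_def t_def power2_eq_square)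
  ultimately show ?thesis using S1 S1b S2 by linarith
qed


lemma part1:
  fixes \<gamma> :: real and z :: complex
  assumes g0: "0 \<le> \<gamma>" and g1: "\<gamma> < 1"
    and hyp: "bohr_hyps \<gamma> h g a b" and z: "z \<in> Omega \<gamma>"
    and \<rho>: "cmod ((1 - \<gamma>) * z + \<gamma>) \<le> 1/5"
  shows "bohr_sum \<gamma> a b (cmod ((1 - \<gamma>) * z + \<gamma>)) \<le> 1"
proof -
  define s where "s = 1 - \<gamma>"
  have s0: "s > 0" using g1 by (simp add: s_def)
  define L :: "complex \<Rightarrow> complex" where "L u = (u - of_real \<gamma>) / of_real s" for u
  have Lk: "L u + of_real (\<gamma> / (1 - \<gamma>)) = u / of_real s" for u
  proof -
    have e1: "complex_of_real (\<gamma> / (1 - \<gamma>)) = of_real \<gamma> / of_real s" by (simp add: s_def)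
    have "(u - of_real \<gamma>) / of_real s + of_real \<gamma> / of_real s = ((u - of_real \<gamma>) + of_real \<gamma>) / of_real s"
      by (rule add_divide_distrib[symmetric])
    then show ?thesis by (simp only: L_def e1) simp
  qed
  have LO: "L u \<in> Omega \<gamma>" if "u \<in> ball 0 1" for u
  proof -
    have "dist (- of_real (\<gamma> / (1 - \<gamma>))) (L u) = norm (L u + of_real (\<gamma> / (1 - \<gamma>)))"
      by (simp add: dist_norm norm_minus_commute add.commute)
    also have "\<dots> = norm u / s" using s0 by (simp only: Lk norm_divide norm_of_real)
    also have "\<dots> < 1 / s" using that s0 by (simp add: divide_strict_right_mono)
    finally show ?thesis by (simp add: Omega_def s_def)
  qed
  have openO: "open (Omega \<gamma>)" by (simp add: Omega_def)
  from hyp have holh: "h holomorphic_on Omega \<gamma>" and holg: "g holomorphic_on Omega \<gamma>"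
    and bndh: "\<And>z. z \<in> Omega \<gamma> \<Longrightarrow> cmod (h z) \<le> 1"
    and serh: "\<And>z. z \<in> Omega \<gamma> \<Longrightarrow> (\<lambda>n. a n * (z + complex_of_real (\<gamma> / (1 - \<gamma>))) ^ n) sums h z"
    and serg: "\<And>z. z \<in> Omega \<gamma> \<Longrightarrow> (\<lambda>n. b (Suc n) * (z + complex_of_real (\<gamma> / (1 - \<gamma>))) ^ Suc n) sums g z"
    and sp: "sense_preserving_on h g (Omega \<gamma>)"
    unfolding bohr_hyps_def by auto
  define H where "H u = h (L u)" for u
  define G where "G u = g (L u)" for u
  define A where "A n = a n / of_real s ^ n" for n
  define B where "B n = b n / of_real s ^ n" for n
  have Lim: "L ` ball 0 1 \<subseteq> Omega \<gamma>" using LO by auto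
  have holL: "L holomorphic_on ball 0 1" unfolding L_def[abs_def] using s0 by (intro holomorphic_intros) auto
  have holH: "H holomorphic_on ball 0 1"
    using holomorphic_on_compose_gen[OF holL holh Lim] by (simp add: H_def[abs_def] o_def)
  have holG: "G holomorphic_on ball 0 1"
    using holomorphic_on_compose_gen[OF holL holg Lim] by (simp add: G_def[abs_def] o_def)
  have bndH: "norm (H u) \<le> 1" if "u \<in> ball 0 1" for u
    using bndh[OF LO[OF that]] by (simp add: H_def)
  have serH: "(\<lambda>n. A n * u^n) sums H u" if "u \<in> ball 0 1" for u
  proof -
    have "(\<lambda>n. a n * (u / of_real s) ^ n) sums H u"
      using serh[OF LO[OF that]] unfolding Lk H_def .
    then show ?thesis by (simp add: A_def power_divide)
  qed
  have serG: "(\<lambda>n. B (Suc n) * u^(Suc n)) sums G u" if "u \<in> ball 0 1" for u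
  proof -
    have "(\<lambda>n. b (Suc n) * (u / of_real s) ^ Suc n) sums G u"
      using serg[OF LO[OF that]] unfolding Lk G_def .
    then show ?thesis by (simp add: B_def power_divide del: power_Suc)
  qed
  have dL: "(L has_field_derivative (1 / of_real s)) (at u)" for u
    unfolding L_def[abs_def] using s0 by (auto intro!: derivative_eq_intros)
  have dH: "deriv H u = deriv h (L u) / of_real s" if "u \<in> ball 0 1" for u
  proof -
    have "(h has_field_derivative deriv h (L u)) (at (L u))"
      by (rule holomorphic_derivI[OF holh openO LO[OF that]])
    from DERIV_chain'[OF dL this] show ?thesis
      unfolding H_def[abs_def] by (intro DERIV_imp_deriv) simp
  qed
  have dG: "deriv G u = deriv g (L u) / of_real s" if "u \<in> ball 0 1" for u
  proof -
    have "(g has_field_derivative deriv g (L u)) (at (L u))"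
      by (rule holomorphic_derivI[OF holg openO LO[OF that]])
    from DERIV_chain'[OF dL this] show ?thesis
      unfolding G_def[abs_def] by (intro DERIV_imp_deriv) simp
  qed
  have spH: "norm (deriv G u)^2 < norm (deriv H u)^2" if "u \<in> ball 0 1" for u
  proof -
    have "(cmod (deriv h (L u)))^2 - (cmod (deriv g (L u)))^2 > 0"
      using sp LO[OF that] by (auto simp: sense_preserving_on_def)
    then have "(cmod (deriv g (L u)))^2 / s^2 < (cmod (deriv h (L u)))^2 / s^2"
      using s0 by (intro divide_strict_right_mono) auto
    then show ?thesis using s0
      by (simp add: dH[OF that] dG[OF that] norm_divide power_divide)
  qed
  define \<rho>' where "\<rho>' = cmod ((1 - \<gamma>) * z + \<gamma>)"
  have main: "(\<Sum>n. norm (A n) * \<rho>'^n) + (\<Sum>n. norm (B (Suc n)) * \<rho>'^(Suc n)) \<le> 1"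
    by (rule bohr_unit[OF holH holG bndH serH serG spH]) (use \<rho> in \<open>auto simp: \<rho>'_def\<close>)
  have "cmod (complex_of_real (1 - \<gamma>)) = 1 - \<gamma>" using g1 by (simp only: norm_of_real)
  then have nsc: "cmod (1 - complex_of_real \<gamma>) = 1 - \<gamma>" by simp
  have eA: "norm (A n) * \<rho>'^n = cmod (a n) / (1 - \<gamma>) ^ n * \<rho>'^n" for n
    using s0 by (simp add: A_def norm_divide norm_power s_def nsc)
  have eB: "norm (B (Suc n)) * \<rho>'^(Suc n) = cmod (b (Suc n)) / (1 - \<gamma>) ^ Suc n * \<rho>'^(Suc n)" for n
    using s0 by (simp add: B_def norm_divide norm_power s_def nsc del: power_Suc)
  show ?thesis
    using main unfolding bohr_sum_def \<rho>'_def[symmetric] eA eB .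
qed


lemma sharp_ineq:
  fixes \<rho> :: real
  assumes "1/5 < \<rho>" "\<rho> < 1"
  defines "\<alpha> \<equiv> (1 + 1 / (5 * \<rho>)) / 2"
  shows "0 < \<alpha>" "\<alpha> < 1" "1 < \<alpha> + (1 + \<alpha>) * ((1 - \<alpha>^2) * \<rho> / (1 - \<alpha> * \<rho>))"
proof -
  have r0: "0 < \<rho>" using assms by simp
  define q where "q = 1 / (5 * \<rho>)"
  have aq: "\<alpha> = (1 + q) / 2" by (simp add: \<alpha>_def q_def)
  have i1: "q < 1" using assms by (simp add: field_simps q_def)
  have i0: "0 < q" using r0 by (simp add: q_def)
  show a0: "0 < \<alpha>" using i0 unfolding aq by simp
  show a1: "\<alpha> < 1" using i1 unfolding aq by simp
  define \<epsilon> where "\<epsilon> = 1 - \<alpha>"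
  have e0: "0 < \<epsilon>" using a1 by (simp add: \<epsilon>_def)
  have e5: "5 * \<rho> * (1 - \<epsilon>) = (5 * \<rho> + 1) / 2"
    using r0 by (simp add: \<epsilon>_def aq q_def field_simps)
  have "\<alpha> * \<rho> < 1 * \<rho>" using a1 r0 by (intro mult_strict_right_mono)
  then have ar: "\<alpha> * \<rho> < 1" using assms(2) by linarith
  have "(1 + \<alpha>)^2 * \<rho> + \<alpha> * \<rho> - 1 \<ge> (4 - 4 * \<epsilon>) * \<rho> + (1 - \<epsilon>) * \<rho> - 1"
  proof -
    have "(1 + \<alpha>)^2 = 4 - 4 * \<epsilon> + \<epsilon>^2" by (simp add: \<epsilon>_def power2_eq_square algebra_simps)
    then have "(1 + \<alpha>)^2 \<ge> 4 - 4 * \<epsilon>" by simp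
    then have "(1 + \<alpha>)^2 * \<rho> \<ge> (4 - 4 * \<epsilon>) * \<rho>" using r0 by (intro mult_right_mono) auto
    then show ?thesis by (simp add: \<epsilon>_def)
  qed
  also have "(4 - 4 * \<epsilon>) * \<rho> + (1 - \<epsilon>) * \<rho> - 1 = (5 * \<rho> - 1) / 2"
    using e5 by (simp add: algebra_simps)
  finally have k1: "(5 * \<rho> - 1) / 2 \<le> (1 + \<alpha>)^2 * \<rho> + \<alpha> * \<rho> - 1" .
  have k2: "(5 * \<rho> - 1) / 2 > 0" using assms(1) by simp
  have key: "(1 + \<alpha>)^2 * \<rho> > 1 - \<alpha> * \<rho>" using k1 k2 by linarith
  have "(1 - \<alpha>) * (1 - \<alpha> * \<rho>) < (1 - \<alpha>) * ((1 + \<alpha>)^2 * \<rho>)"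
    using key a1 by (intro mult_strict_left_mono) auto
  then have "1 - \<alpha> < (1 + \<alpha>) * ((1 - \<alpha>^2) * \<rho>) / (1 - \<alpha> * \<rho>)"
    using ar by (simp add: field_simps power2_eq_square)
  then show "1 < \<alpha> + (1 + \<alpha>) * ((1 - \<alpha>^2) * \<rho> / (1 - \<alpha> * \<rho>))"
    by (simp add: field_simps)
qed

lemma part2:
  fixes \<gamma> \<rho> :: real
  assumes g0: "0 \<le> \<gamma>" and g1: "\<gamma> < 1" and r1: "1/5 < \<rho>" and r2: "\<rho> < 1"
  shows "\<exists>h g a b. bohr_hyps \<gamma> h g a b \<and> bohr_sum \<gamma> a b \<rho> > 1"
proof -
  define \<alpha> where "\<alpha> = (1 + 1 / (5 * \<rho>)) / 2"
  have a0: "0 < \<alpha>" and a1: "\<alpha> < 1"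
    and big: "1 < \<alpha> + (1 + \<alpha>) * ((1 - \<alpha>^2) * \<rho> / (1 - \<alpha> * \<rho>))"
    using sharp_ineq[OF r1 r2] unfolding \<alpha>_def by auto
  have r0: "0 < \<rho>" using r1 by simp
  define s where "s = 1 - \<gamma>"
  have s0: "s > 0" using g1 by (simp add: s_def)
  define ca where "ca = complex_of_real \<alpha>"
  define Z :: "complex \<Rightarrow> complex" where "Z z = of_real s * z + of_real \<gamma>" for z
  define A :: "nat \<Rightarrow> complex" where "A n = (if n = 0 then ca else - of_real (1 - \<alpha>^2) * ca^(n - 1))" for n
  define h where "h z = (ca - Z z) / (1 - ca * Z z)" for z
  define g where "g z = ca * (h z - ca)" for z
  define a :: "nat \<Rightarrow> complex" where "a n = A n * of_real s ^ n" for n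
  define b :: "nat \<Rightarrow> complex" where "b n = ca * a n" for n
  have nca: "norm ca = \<alpha>" using a0 by (simp add: ca_def)
  have cca: "cnj ca = ca" by (simp add: ca_def)
  have kZ: "of_real s * (z + complex_of_real (\<gamma> / (1 - \<gamma>))) = Z z" for z
  proof -
    have "complex_of_real s * complex_of_real (\<gamma> / (1 - \<gamma>)) = of_real (s * (\<gamma> / (1 - \<gamma>)))"
      by simp
    also have "s * (\<gamma> / (1 - \<gamma>)) = \<gamma>" using s0 by (simp add: s_def)
    finally show ?thesis by (simp add: Z_def distrib_left)
  qed
  have nZ: "norm (Z z) < 1" if "z \<in> Omega \<gamma>" for z
  proof -
    have "dist (- of_real (\<gamma> / (1 - \<gamma>))) z = norm (z + of_real (\<gamma> / (1 - \<gamma>)))"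
      by (simp add: dist_norm norm_minus_commute add.commute)
    moreover have "dist (- of_real (\<gamma> / (1 - \<gamma>))) z < 1 / s"
      using that unfolding Omega_def mem_ball s_def .
    ultimately have "norm (z + complex_of_real (\<gamma> / (1 - \<gamma>))) < 1 / s" by simp
    then have "s * norm (z + complex_of_real (\<gamma> / (1 - \<gamma>))) < s * (1 / s)"
      using s0 by (intro mult_strict_left_mono) auto
    also have "\<dots> = 1" using s0 by simp
    finally show ?thesis using s0 by (simp flip: kZ add: norm_mult)
  qed
  have ncaZ: "norm (ca * u) < 1" if "norm u < 1" for u
  proof -
    have "norm (ca * u) = \<alpha> * norm u" by (simp add: norm_mult nca)
    also have "\<dots> \<le> 1 * norm u" using a1 by (intro mult_right_mono) auto
    finally show ?thesis using that by simp
  qed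
  have den: "1 - ca * u \<noteq> 0" if "norm u < 1" for u
    using ncaZ[OF that] by auto
  have ser: "(\<lambda>n. A (Suc n) * u^(Suc n)) sums ((ca - u) / (1 - ca * u) - ca)"
    and ser0: "(\<lambda>n. A n * u^n) sums ((ca - u) / (1 - ca * u))" if u: "norm u < 1" for u
  proof -
    have "(\<lambda>n. (ca * u)^n) sums (1 / (1 - ca * u))" by (rule geometric_sums[OF ncaZ[OF u]])
    then have P: "(\<lambda>n. (- of_real (1 - \<alpha>^2) * u) * (ca * u)^n) sums ((- of_real (1 - \<alpha>^2) * u) * (1 / (1 - ca * u)))"
      by (rule sums_mult)
    have E1: "(- of_real (1 - \<alpha>^2) * u) * (ca * u)^n = A (Suc n) * u^(Suc n)" for n
      by (simp add: A_def power_mult_distrib algebra_simps)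
    have E2: "(- of_real (1 - \<alpha>^2) * u) * (1 / (1 - ca * u)) = (ca - u) / (1 - ca * u) - ca"
    proof -
      have "ca^2 = of_real (\<alpha>^2)" by (simp add: ca_def)
      then show ?thesis using den[OF u] by (simp add: field_simps power2_eq_square)
    qed
    show "(\<lambda>n. A (Suc n) * u^(Suc n)) sums ((ca - u) / (1 - ca * u) - ca)"
      using P unfolding E1 E2 .
    then show "(\<lambda>n. A n * u^n) sums ((ca - u) / (1 - ca * u))"
      by (subst (asm) sums_Suc_iff) (simp add: A_def)
  qed
  have openO: "open (Omega \<gamma>)" by (simp add: Omega_def)
  have holh: "h holomorphic_on Omega \<gamma>"
    unfolding h_def[abs_def] Z_def[abs_def] using den nZ unfolding Z_def
    by (intro holomorphic_intros) auto
  have holg: "g holomorphic_on Omega \<gamma>"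
    unfolding g_def[abs_def] by (intro holomorphic_intros holh)
  have bndh: "cmod (h z) \<le> 1" if "z \<in> Omega \<gamma>" for z
  proof -
    have "norm (Z z - ca) \<le> norm (1 - cnj ca * Z z)"
      using nZ[OF that] a1 by (intro moebius_le) (auto simp: nca)
    then have "norm (ca - Z z) \<le> norm (1 - ca * Z z)" by (simp add: cca norm_minus_commute)
    moreover have "norm (1 - ca * Z z) > 0" using den[OF nZ[OF that]] by simp
    ultimately show ?thesis by (simp add: h_def norm_divide divide_le_eq_1)
  qed
  have serh: "(\<lambda>n. a n * (z + complex_of_real (\<gamma> / (1 - \<gamma>))) ^ n) sums h z" if "z \<in> Omega \<gamma>" for z
  proof -
    have "a n * (z + complex_of_real (\<gamma> / (1 - \<gamma>))) ^ n = A n * Z z ^ n" for n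
      unfolding a_def kZ[symmetric] by (simp add: power_mult_distrib)
    then show ?thesis using ser0[OF nZ[OF that]] by (simp add: h_def)
  qed
  have serg: "(\<lambda>n. b (Suc n) * (z + complex_of_real (\<gamma> / (1 - \<gamma>))) ^ Suc n) sums g z" if "z \<in> Omega \<gamma>" for z
  proof -
    have "b (Suc n) * (z + complex_of_real (\<gamma> / (1 - \<gamma>))) ^ Suc n = ca * (A (Suc n) * Z z ^ Suc n)" for n
      unfolding b_def a_def kZ[symmetric] by (simp only: power_mult_distrib mult_ac)
    then show ?thesis using sums_mult[OF ser[OF nZ[OF that]], of ca] by (simp add: g_def h_def)
  qed
  define D where "D z = - of_real s * (1 - ca^2) / (1 - ca * Z z)^2" for z
  have dh: "(h has_field_derivative D z) (at z)" if "z \<in> Omega \<gamma>" for z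
  proof -
    have nz: "1 - ca * Z z \<noteq> 0" by (rule den[OF nZ[OF that]])
    show ?thesis
      unfolding h_def[abs_def] Z_def
      apply (rule derivative_eq_intros refl)+
      using nz unfolding D_def Z_def
      by (auto simp: field_simps power2_eq_square)
  qed
  have dg: "(g has_field_derivative ca * D z) (at z)" if "z \<in> Omega \<gamma>" for z
    unfolding g_def[abs_def]
    by (rule derivative_eq_intros dh[OF that] refl)+ simp
  have Dnz: "D z \<noteq> 0" if "z \<in> Omega \<gamma>" for z
  proof -
    have "1 - ca^2 \<noteq> 0"
    proof -
      have "ca^2 = of_real (\<alpha>^2)" by (simp add: ca_def)
      moreover have "\<alpha>^2 < 1" using a0 a1 by (simp add: abs_square_less_1)
      ultimately show ?thesis by (metis of_real_1 of_real_eq_iff eq_iff_diff_eq_0 less_irrefl)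
    qed
    then show ?thesis using den[OF nZ[OF that]] s0 by (simp add: D_def)
  qed
  have sp: "sense_preserving_on h g (Omega \<gamma>)"
    unfolding sense_preserving_on_def
  proof
    fix z assume z: "z \<in> Omega \<gamma>"
    have "deriv h z = D z" by (rule DERIV_imp_deriv[OF dh[OF z]])
    moreover have "deriv g z = ca * D z" by (rule DERIV_imp_deriv[OF dg[OF z]])
    moreover have "(cmod (D z))^2 - (cmod (ca * D z))^2 = (cmod (D z))^2 * (1 - \<alpha>^2)"
      by (simp add: norm_mult nca power_mult_distrib algebra_simps)
    moreover have "(cmod (D z))^2 * (1 - \<alpha>^2) > 0"
      using Dnz[OF z] a0 a1 by (intro mult_pos_pos) (auto simp: abs_square_less_1)
    ultimately show "(cmod (deriv h z))^2 - (cmod (deriv g z))^2 > 0" by simp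
  qed
  have hyps: "bohr_hyps \<gamma> h g a b"
    unfolding bohr_hyps_def using holh holg bndh serh serg sp by auto
  have nAS: "cmod (a (Suc n)) / (1 - \<gamma>) ^ Suc n * \<rho> ^ Suc n = (1 - \<alpha>^2) * \<rho> * (\<alpha> * \<rho>)^n" for n
  proof -
    have q: "\<alpha>^2 < 1" using a0 a1 by (simp add: abs_square_less_1)
    have n1: "norm (- complex_of_real (1 - \<alpha>^2)) = 1 - \<alpha>^2"
      using q by (simp only: norm_minus_cancel norm_of_real)
    have e: "a (Suc n) = (- of_real (1 - \<alpha>^2) * ca^n) * of_real s^(Suc n)"
      by (simp only: a_def A_def Suc_not_Zero if_False diff_Suc_1)
    have "cmod (a (Suc n)) = (1 - \<alpha>^2) * \<alpha>^n * \<bar>s\<bar>^(Suc n)"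
      unfolding e by (simp only: norm_mult norm_power n1 nca norm_of_real)
    then have "cmod (a (Suc n)) = (1 - \<alpha>^2) * \<alpha>^n * s^(Suc n)" using s0 by simp
    then show ?thesis using s0 by (simp add: s_def[symmetric] power_mult_distrib del: power_Suc) (simp add: field_simps)
  qed
  have nA0: "cmod (a 0) / (1 - \<gamma>) ^ 0 * \<rho> ^ 0 = \<alpha>"
    by (simp add: a_def A_def nca)
  have nBS: "cmod (b (Suc n)) / (1 - \<gamma>) ^ Suc n * \<rho> ^ Suc n = \<alpha> * ((1 - \<alpha>^2) * \<rho> * (\<alpha> * \<rho>)^n)" for n
  proof -
    have "cmod (b (Suc n)) / (1 - \<gamma>) ^ Suc n * \<rho> ^ Suc n = \<alpha> * (cmod (a (Suc n)) / (1 - \<gamma>) ^ Suc n * \<rho> ^ Suc n)"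
      by (simp add: b_def norm_mult nca del: power_Suc)
    then show ?thesis by (simp only: nAS)
  qed
  have ar: "norm (\<alpha> * \<rho>) < 1"
  proof -
    have "\<alpha> * \<rho> < 1 * 1" using a0 a1 r0 r2 by (intro mult_strict_mono) auto
    then show ?thesis using a0 r0 by simp
  qed
  have geo: "(\<lambda>n. (1 - \<alpha>^2) * \<rho> * (\<alpha> * \<rho>)^n) sums ((1 - \<alpha>^2) * \<rho> / (1 - \<alpha> * \<rho>))"
    using sums_mult[OF geometric_sums[OF ar], of "(1 - \<alpha>^2) * \<rho>"] by simp
  have S1: "(\<lambda>n. cmod (a n) / (1 - \<gamma>) ^ n * \<rho> ^ n) sums ((1 - \<alpha>^2) * \<rho> / (1 - \<alpha> * \<rho>) + \<alpha>)"
  proof -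
    have "(\<lambda>n. cmod (a (Suc n)) / (1 - \<gamma>) ^ Suc n * \<rho> ^ Suc n) sums ((1 - \<alpha>^2) * \<rho> / (1 - \<alpha> * \<rho>))"
      unfolding nAS by (rule geo)
    then show ?thesis by (subst (asm) sums_Suc_iff) (simp only: nA0)
  qed
  have S2: "(\<lambda>n. cmod (b (Suc n)) / (1 - \<gamma>) ^ Suc n * \<rho> ^ Suc n) sums (\<alpha> * ((1 - \<alpha>^2) * \<rho> / (1 - \<alpha> * \<rho>)))"
    unfolding nBS by (rule sums_mult[OF geo])
  have "bohr_sum \<gamma> a b \<rho> = ((1 - \<alpha>^2) * \<rho> / (1 - \<alpha> * \<rho>) + \<alpha>) + \<alpha> * ((1 - \<alpha>^2) * \<rho> / (1 - \<alpha> * \<rho>))"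
    unfolding bohr_sum_def using sums_unique[OF S1] sums_unique[OF S2] by simp
  also have "\<dots> = \<alpha> + (1 + \<alpha>) * ((1 - \<alpha>^2) * \<rho> / (1 - \<alpha> * \<rho>))"
    by (simp only: distrib_right mult_1_left add_ac)
  finally have "bohr_sum \<gamma> a b \<rho> > 1" using big by simp
  with hyps show ?thesis by blast
qed


theorem corollary2p1:
  fixes \<gamma> :: real
  assumes "0 \<le> \<gamma>" and "\<gamma> < 1"
  shows "(\<forall>h g a b. bohr_hyps \<gamma> h g a b \<longrightarrow>
            (\<forall>z\<in>Omega \<gamma>. cmod ((1 - \<gamma>) * z + \<gamma>) \<le> 1/5 \<longrightarrow>
               bohr_sum \<gamma> a b (cmod ((1 - \<gamma>) * z + \<gamma>)) \<le> 1))
       \<and> (\<forall>\<rho>. 1/5 < \<rho> \<and> \<rho> < 1 \<longrightarrow>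
            (\<exists>h g a b. bohr_hyps \<gamma> h g a b \<and> bohr_sum \<gamma> a b \<rho> > 1))"
proof -
  have P1: "bohr_sum \<gamma> a b (cmod ((1 - \<gamma>) * z + \<gamma>)) \<le> 1"
    if "bohr_hyps \<gamma> h g a b" "z \<in> Omega \<gamma>" "cmod ((1 - \<gamma>) * z + \<gamma>) \<le> 1/5" for h g a b and z :: complex
    using part1[OF assms that] .
  have P2: "\<exists>h g a b. bohr_hyps \<gamma> h g a b \<and> bohr_sum \<gamma> a b \<rho> > 1"
    if "1/5 < \<rho>" "\<rho> < 1" for \<rho> :: real
    using part2[OF assms that] .
  show ?thesis using P1 P2 by blast
qed

end
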